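(* Let $f\colon[0,1]\to\mathbb R$ be real analytic. Then for every $\varepsilon>0$ there exists an integer $R\ge 0$ such that for all integers $r\ge R$, $m\ge 1$, $b\ge 1$ and every $B=(B_1,\dots,B_b)\in\mathrm{PTE}(m,b,r)$, the quantities $$c_j=\sum_{i\in B_j}\int_{(i-1)/m}^{i/m} f(x)\,dx,\qquad j=1,\dots,b,$$ satisfy $|c_i-c_j|<\varepsilon$ for all $i,j\in\{1,\dots,b\}$.
   Context: $[m]=\{1,\dots,m\}$. A partition of $[m]$ into $b$ blocks is an ordered list $(B_1,\dots,B_b)$ of pairwise disjoint (possibly empty) subsets with union $[m]$. It is $r$-regular if $\sum_{x\in B_1}x^k=\dots=\sum_{x\in B_b}x^k$ for all $k=0,1,\dots,r$. $\mathrm{PTE}(m,b,r)$ denotes the set of $r$-regular partitions of $[m]$ into $b$ blocks. *)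

theory Defs
  imports "HOL-Analysis.Analysis"
begin

definition real_analytic_on :: "(real \<Rightarrow> real) \<Rightarrow> real set \<Rightarrow> bool" where
  "real_analytic_on f S \<longleftrightarrow>
     (\<forall>x0\<in>S. \<exists>d>0. \<exists>a::nat \<Rightarrow> real. \<forall>x\<in>S. \<bar>x - x0\<bar> < d \<longrightarrow>
        (\<lambda>n. a n * (x - x0) ^ n) sums f x)"

definition is_partition :: "nat \<Rightarrow> nat \<Rightarrow> (nat \<Rightarrow> nat set) \<Rightarrow> bool" where
  "is_partition m b B \<longleftrightarrow>
     (\<forall>i\<in>{1..b}. \<forall>j\<in>{1..b}. i \<noteq> j \<longrightarrow> B i \<inter> B j = {}) \<and>
     (\<Union>j\<in>{1..b}. B j) = {1..m}"

definition r_regular :: "nat \<Rightarrow> nat \<Rightarrow> (nat \<Rightarrow> nat set) \<Rightarrow> bool" where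
  "r_regular b r B \<longleftrightarrow>
     (\<forall>k\<in>{0..r}. \<forall>i\<in>{1..b}. \<forall>j\<in>{1..b}. (\<Sum>x\<in>B i. x ^ k) = (\<Sum>x\<in>B j. x ^ k))"

definition PTE :: "nat \<Rightarrow> nat \<Rightarrow> nat \<Rightarrow> (nat \<Rightarrow> nat set) set" where
  "PTE m b r = {B. is_partition m b B \<and> r_regular b r B}"

end

theory Submission
  imports Defs
begin

lemma analytic_cont:
  assumes "real_analytic_on f {0..1}"
  shows "continuous_on {0..1} f"
proof -
  have "continuous (at x0 within {0..1}) f" if x0: "x0 \<in> {0..1}" for x0
  proof -
    obtain d a where d: "d > 0" and ser: "\<And>x. x \<in> {0..1} \<Longrightarrow> \<bar>x - x0\<bar> < d \<Longrightarrow> (\<lambda>n. a n * (x - x0) ^ n) sums f x"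
      using assms x0 unfolding real_analytic_on_def by blast
    define x1 where "x1 = (if x0 \<le> 1/2 then x0 + min (d/2) (1/2) else x0 - min (d/2) (1/2))"
    have x1: "x1 \<in> {0..1}" "\<bar>x1 - x0\<bar> < d" "\<bar>x1 - x0\<bar> > 0"
      using x0 d unfolding x1_def by auto
    have sm: "summable (\<lambda>n. a n * (x1 - x0) ^ n)"
      using ser[OF x1(1,2)] sums_summable by blast
    have c0: "isCont (\<lambda>x. \<Sum>n. a n * x ^ n) 0"
      by (rule isCont_powser[OF sm]) (use x1 in auto)
    have cs: "isCont (\<lambda>y. y - x0) x0" by (intro continuous_intros)
    have "isCont (\<lambda>y. \<Sum>n. a n * (y - x0) ^ n) x0"
      using isCont_o2[OF cs, of "\<lambda>x. \<Sum>n. a n * x ^ n"] c0 by simp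
    hence c1: "continuous (at x0 within {0..1}) (\<lambda>y. \<Sum>n. a n * (y - x0) ^ n)"
      using continuous_at_imp_continuous_within by blast
    show ?thesis
    proof (rule continuous_transform_within[OF c1 d x0])
      fix x' assume "x' \<in> {0..1}" "dist x' x0 < d"
      then show "(\<Sum>n. a n * (x' - x0) ^ n) = f x'"
      proof -
        have "(\<lambda>n. a n * (x' - x0) ^ n) sums f x'"
          using ser[of x'] \<open>x' \<in> {0..1}\<close> \<open>dist x' x0 < d\<close> by (auto simp: dist_real_def)
        then show ?thesis by (simp add: sums_iff)
      qed
    qed
  qed
  then show ?thesis unfolding continuous_on_eq_continuous_within by blast
qed

lemma poly_block:
  assumes "B \<in> PTE m b r" "degree q \<le> r" "i \<in> {1..b}" "j \<in> {1..b}"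
  shows "(\<Sum>x\<in>B i. poly q (real x)) = (\<Sum>x\<in>B j. poly q (real x))"
proof -
  have eq: "(\<Sum>x\<in>B i. real x ^ k) = (\<Sum>x\<in>B j. real x ^ k)" if "k \<le> degree q" for k
  proof -
    have reg: "r_regular b r B" using assms(1) unfolding PTE_def by simp
    have kr: "k \<in> {0..r}" using that assms(2) by simp
    have "(\<Sum>x\<in>B i. x ^ k) = (\<Sum>x\<in>B j. x ^ k)"
      using reg kr assms(3,4) unfolding r_regular_def by blast
    hence "real (\<Sum>x\<in>B i. x ^ k) = real (\<Sum>x\<in>B j. x ^ k)" by simp
    thus ?thesis by simp
  qed
  have "(\<Sum>x\<in>B i. poly q (real x)) = (\<Sum>k\<le>degree q. coeff q k * (\<Sum>x\<in>B i. real x ^ k))"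
    by (simp add: poly_altdef sum_distrib_left sum.swap[of _ "B i"])
  also have "\<dots> = (\<Sum>k\<le>degree q. coeff q k * (\<Sum>x\<in>B j. real x ^ k))"
    using eq by (intro sum.cong) auto
  also have "\<dots> = (\<Sum>x\<in>B j. poly q (real x))"
    by (simp add: poly_altdef sum_distrib_left sum.swap[of _ "B j"])
  finally show ?thesis .
qed


lemma dF1: "((\<lambda>x::real. c / real (Suc i) * x^(Suc i)) has_real_derivative c * x^i) (at x)"
proof -
  have "((\<lambda>x::real. c / real (Suc i) * x^(Suc i)) has_real_derivative c / real (Suc i) * (real (Suc i) * x^(Suc i - Suc 0))) (at x)"
    by (intro DERIV_cmult DERIV_pow)
  moreover have "c / real (Suc i) * (real (Suc i) * x^(Suc i - Suc 0)) = c * x^i"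
    by (simp del: of_nat_Suc)
  ultimately show ?thesis by simp
qed

lemma tri: "b = d \<Longrightarrow> \<bar>a - b\<bar> \<le> e \<Longrightarrow> \<bar>c - d\<bar> \<le> e \<Longrightarrow> \<bar>a - c\<bar> \<le> e + e" for a b c d e :: real
  by linarith

lemma fin: "x \<le> e/3 + e/3 \<Longrightarrow> e > 0 \<Longrightarrow> x < e" for x e :: real
  by linarith

lemma chain:
  fixes h :: "nat \<Rightarrow> real"
  assumes "\<And>x. x \<in> A \<Longrightarrow> \<bar>h x\<bar> \<le> K" "A \<subseteq> {1..m}" "0 \<le> K"
  shows "\<bar>sum h A\<bar> \<le> real m * K"
proof -
  have "\<bar>sum h A\<bar> \<le> sum (\<lambda>x. \<bar>h x\<bar>) A" by (rule sum_abs)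
  also have "\<dots> \<le> real (card A) * K" by (rule sum_bounded_above) (use assms in auto)
  also have "\<dots> \<le> real m * K"
  proof -
    have "card A \<le> card {1..m}" by (rule card_mono[OF _ assms(2)]) auto
    then show ?thesis using assms(3) by (intro mult_right_mono) auto
  qed
  finally show ?thesis .
qed

lemma deg_lin_pow: "degree ([:c, d:] ^ k) \<le> k" for c d :: real
  using degree_power_le[of "[:c,d:]" k] by (cases "d = 0") auto

theorem mainTheorem16:
  fixes f :: "real \<Rightarrow> real"
  assumes "real_analytic_on f {0..1}"
  shows "\<forall>\<epsilon>>0. \<exists>R::nat. \<forall>r m b B. r \<ge> R \<longrightarrow> m \<ge> 1 \<longrightarrow> b \<ge> 1 \<longrightarrow> B \<in> PTE m b r \<longrightarrow>
           (\<forall>i\<in>{1..b}. \<forall>j\<in>{1..b}.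
              \<bar>(\<Sum>x\<in>B i. integral {(real x - 1) / real m .. real x / real m} f)
               - (\<Sum>x\<in>B j. integral {(real x - 1) / real m .. real x / real m} f)\<bar> < \<epsilon>)"
proof (intro allI impI)
  fix \<epsilon> :: real assume \<epsilon>: "\<epsilon> > 0"
  have cf: "continuous_on {0..1} f" using assms by (rule analytic_cont)
  obtain g where pg: "real_polynomial_function g"
    and gap: "\<And>x. x \<in> {0..1::real} \<Longrightarrow> \<bar>f x - g x\<bar> < \<epsilon>/3"
    using Stone_Weierstrass_real_polynomial_function[OF compact_Icc cf, of "\<epsilon>/3"] \<epsilon> by auto
  obtain a n where g: "g = (\<lambda>x. \<Sum>i\<le>n. a i * x^i)"
    using pg real_polynomial_function_iff_sum by auto
  define F where "F = (\<lambda>x::real. \<Sum>i\<le>n. a i / real (Suc i) * x^(Suc i))"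
  have dF: "(F has_real_derivative g x) (at x)" for x
    unfolding F_def g by (rule DERIV_sum) (rule dF1)
  have intg: "(g has_integral (F v - F u)) {u..v}" if "u \<le> v" for u v
    using that dF by (intro fundamental_theorem_of_calculus)
      (auto simp: has_real_derivative_iff_has_vector_derivative[symmetric] intro: has_field_derivative_at_within)
  define Gp where "Gp m = (\<Sum>i\<le>n. smult (a i / real (Suc i))
        ([:0, 1/real m:]^(Suc i) - [:-1/real m, 1/real m:]^(Suc i)))" for m::nat
  have p2: "poly [:-1/real m, 1/real m:] y = (y-1)/real m" for m y
    by (simp add: diff_divide_distrib)
  have Gp_poly: "poly (Gp m) y = F (y / real m) - F ((y - 1)/real m)" for m y
    unfolding Gp_def F_def
    by (simp only: poly_sum poly_smult poly_diff poly_power p2 sum_subtractf[symmetric] right_diff_distrib) simp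
  have Gp_deg: "degree (Gp m) \<le> Suc n" for m
    unfolding Gp_def
    by (intro degree_sum_le order.trans[OF degree_smult_le] degree_diff_le
        order.trans[OF deg_lin_pow]) auto
  show "\<exists>R::nat. \<forall>r m b B. r \<ge> R \<longrightarrow> m \<ge> 1 \<longrightarrow> b \<ge> 1 \<longrightarrow> B \<in> PTE m b r \<longrightarrow>
           (\<forall>i\<in>{1..b}. \<forall>j\<in>{1..b}.
              \<bar>(\<Sum>x\<in>B i. integral {(real x - 1) / real m .. real x / real m} f)
               - (\<Sum>x\<in>B j. integral {(real x - 1) / real m .. real x / real m} f)\<bar> < \<epsilon>)"
  proof (intro exI[of _ "Suc n"] allI impI ballI)
    fix r m b B i j
    assume r: "Suc n \<le> r" and m: "1 \<le> m" and "1 \<le> b" and B: "B \<in> PTE m b r"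
      and i: "i \<in> {1..b}" and j: "j \<in> {1..b}"
    define I where "I x = {(real x - 1)/real m .. real x / real m}" for x::nat
    have sub: "B k \<subseteq> {1..m}" if "k \<in> {1..b}" for k
      using B that unfolding PTE_def is_partition_def by blast
    have close: "\<bar>(\<Sum>x\<in>B k. integral (I x) f) - (\<Sum>x\<in>B k. poly (Gp m) (real x))\<bar> \<le> \<epsilon>/3"
      if k: "k \<in> {1..b}" for k
    proof -
      have each: "\<bar>integral (I x) f - poly (Gp m) (real x)\<bar> \<le> \<epsilon>/3 / real m" if x: "x \<in> B k" for x
      proof -
        have x1: "1 \<le> x" "x \<le> m" using sub[OF k] x by auto
        have Isub: "I x \<subseteq> {0..1}" using x1 unfolding I_def by (auto simp: field_simps)
        have le: "(real x - 1)/real m \<le> real x / real m" using m by (simp add: divide_right_mono)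
        have hg: "(g has_integral poly (Gp m) (real x)) (I x)"
          unfolding Gp_poly I_def using intg[OF le] by simp
        have hf: "(f has_integral integral (I x) f) (I x)" unfolding I_def
          by (intro integrable_integral integrable_continuous_interval continuous_on_subset[OF cf])
            (use Isub I_def in auto)
        define v where "v = integral (I x) f - poly (Gp m) (real x)"
        have hd: "((\<lambda>y. f y - g y) has_integral v) (I x)"
          unfolding v_def using has_integral_diff[OF hf hg] .
        have "norm v \<le> \<epsilon>/3 * measure lborel (I x)"
          unfolding I_def
        proof (rule has_integral_bound_real[of "\<epsilon>/3" "{}"])
          show "((\<lambda>y. f y - g y) has_integral v)
                 {(real x - 1)/real m .. real x / real m}" using hd unfolding I_def .
          fix y assume "y \<in> {(real x - 1)/real m .. real x / real m} - {}"
          then have "y \<in> {0..1}" using Isub unfolding I_def by auto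
          then show "norm (f y - g y) \<le> \<epsilon>/3" using gap[of y] by simp
        qed (use \<epsilon> in auto)
        also have "measure lborel (I x) = 1 / real m"
          unfolding I_def using le m by (simp add: diff_divide_distrib[symmetric])
        finally show ?thesis unfolding v_def
          by (simp only: real_norm_def times_divide_eq_right mult_1_right)
      qed
      have "\<bar>(\<Sum>x\<in>B k. integral (I x) f) - (\<Sum>x\<in>B k. poly (Gp m) (real x))\<bar>
          = \<bar>\<Sum>x\<in>B k. integral (I x) f - poly (Gp m) (real x)\<bar>"
        by (simp only: sum_subtractf)
      also have "\<dots> \<le> real m * (\<epsilon>/3 / real m)"
        by (rule chain[OF each sub[OF k]]) (use \<epsilon> in \<open>auto intro!: divide_nonneg_nonneg\<close>)
      also have "\<dots> = \<epsilon>/3" using m by simp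
      finally show ?thesis .
    qed
    have same: "(\<Sum>x\<in>B i. poly (Gp m) (real x)) = (\<Sum>x\<in>B j. poly (Gp m) (real x))"
      by (rule poly_block[OF B _ i j]) (use Gp_deg[of m] r in linarith)
    have hb: "\<bar>(\<Sum>x\<in>B i. integral (I x) f) - (\<Sum>x\<in>B j. integral (I x) f)\<bar> \<le> \<epsilon>/3 + \<epsilon>/3"
      by (rule tri[OF same close[OF i] close[OF j]])
    show "\<bar>(\<Sum>x\<in>B i. integral {(real x - 1) / real m .. real x / real m} f)
               - (\<Sum>x\<in>B j. integral {(real x - 1) / real m .. real x / real m} f)\<bar> < \<epsilon>"
      using fin[OF hb \<epsilon>] unfolding I_def .
  qed
qed

end
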